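(* Let $\mathcal{H}$ be a complex Hilbert space, let $A\in\mathcal{B}(\mathcal{H})$ be a nonzero positive operator, and let $\mathbb{A}=\begin{pmatrix}A&O\\O&A\end{pmatrix}$ acting on $\mathcal{H}\oplus\mathcal{H}$. Let $P,Q,R,S\in\mathcal{B}_A(\mathcal{H})$. Then for every $\lambda\in[0,1]$, $$\omega_{\mathbb{A}}\left[\begin{pmatrix}P&Q\\R&S\end{pmatrix}\right]\leq \frac{1}{2}\left(\|P\|_A+2\omega_A(S)+\sqrt{\|\lambda^2 PP^{\sharp_A}+QQ^{\sharp_A}\|_A}+\sqrt{\|(1-\lambda)^2 PP^{\sharp_A}+R^{\sharp_A}R\|_A}\right).$$
   Context: For a positive operator $A$ on $\mathcal{H}$, $\langle x,y\rangle_A:=\langle Ax,y\rangle$ and $\|x\|_A:=\sqrt{\langle x,x\rangle_A}$. $\mathcal{B}_A(\mathcal{H})$ is the set of $T\in\mathcal{B}(\mathcal{H})$ with $\mathcal{R}(T^*A)\subseteq\mathcal{R}(A)$; for such $T$, $T^{\sharp_A}$ denotes the unique solution $X$ of $AX=T^*A$ with $\mathcal{R}(X)\subseteq\overline{\mathcal{R}(A)}$ (equivalently $T^{\sharp_A}=A^\dagger T^*A$). $\mathcal{B}_{A^{1/2}}(\mathcal{H})$ is the set of $T$ with $\|Tx\|_A\le\lambda\|x\|_A$ for some $\lambda>0$ and all $x$. For $T\in\mathcal{B}_{A^{1/2}}(\mathcal{H})$: $\|T\|_A:=\sup\{\|Tx\|_A:\|x\|_A=1\}$ and $\omega_A(T):=\sup\{|\langle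 Tx,x\rangle_A|:\|x\|_A=1\}$. The same notions with $A$ replaced by the positive operator $\mathbb{A}$ on $\mathcal{H}\oplus\mathcal{H}$ give $\omega_{\mathbb{A}}$, $\|\cdot\|_{\mathbb{A}}$, where $\langle (x_1,x_2),(y_1,y_2)\rangle_{\mathbb{A}}=\langle x_1,y_1\rangle_A+\langle x_2,y_2\rangle_A$. *)

theory Defs
  imports "HOL-Analysis.Analysis"
begin

class scaleC =
  fixes scaleC :: "complex \<Rightarrow> 'a \<Rightarrow> 'a"

class complex_vector = scaleC + real_vector +
  assumes scaleC_add_right: "scaleC a (x + y) = scaleC a x + scaleC a y"
    and scaleC_add_left: "scaleC (a + b) x = scaleC a x + scaleC b x"
    and scaleC_scaleC: "scaleC a (scaleC b x) = scaleC (a * b) x"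
    and scaleC_one: "scaleC 1 x = x"
    and scaleR_scaleC: "scaleR r x = scaleC (complex_of_real r) x"

class complex_inner = complex_vector + real_normed_vector +
  fixes cinner :: "'a \<Rightarrow> 'a \<Rightarrow> complex"
  assumes cinner_commute: "cinner x y = cnj (cinner y x)"
    and cinner_add_left: "cinner (x + y) z = cinner x z + cinner y z"
    and cinner_scaleC_left: "cinner (scaleC r x) y = r * cinner x y"
    and cinner_ge_zero: "0 \<le> Re (cinner x x)"
    and cinner_eq_zero_iff: "cinner x x = 0 \<longleftrightarrow> x = 0"
    and norm_eq_sqrt_cinner: "norm x = sqrt (Re (cinner x x))"

class chilbert_space = complex_inner + complete_space

definition bounded_clinear :: "('a::complex_inner \<Rightarrow> 'a) \<Rightarrow> bool" where
  "bounded_clinear T \<longleftrightarrow>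
     (\<forall>x y. T (x + y) = T x + T y) \<and> (\<forall>c x. T (scaleC c x) = scaleC c (T x)) \<and>
     (\<exists>K. \<forall>x. norm (T x) \<le> norm x * K)"

definition adj :: "('a::complex_inner \<Rightarrow> 'a) \<Rightarrow> ('a \<Rightarrow> 'a)" where
  "adj T = (THE S. \<forall>x y. cinner (T x) y = cinner x (S y))"

definition positive_op :: "('a::complex_inner \<Rightarrow> 'a) \<Rightarrow> bool" where
  "positive_op A \<longleftrightarrow> bounded_clinear A \<and>
     (\<forall>x. Im (cinner (A x) x) = 0 \<and> 0 \<le> Re (cinner (A x) x))"

definition ipA :: "('a::complex_inner \<Rightarrow> 'a) \<Rightarrow> 'a \<Rightarrow> 'a \<Rightarrow> complex" where
  "ipA A x y = cinner (A x) y"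

definition normA :: "('a::complex_inner \<Rightarrow> 'a) \<Rightarrow> 'a \<Rightarrow> real" where
  "normA A x = sqrt (Re (ipA A x x))"

definition BA :: "('a::complex_inner \<Rightarrow> 'a) \<Rightarrow> ('a \<Rightarrow> 'a) set" where
  "BA A = {T. bounded_clinear T \<and> range (adj T \<circ> A) \<subseteq> range A}"

definition sharpA :: "('a::complex_inner \<Rightarrow> 'a) \<Rightarrow> ('a \<Rightarrow> 'a) \<Rightarrow> ('a \<Rightarrow> 'a)" where
  "sharpA A T = (THE X. bounded_clinear X \<and> (\<forall>x. A (X x) = adj T (A x)) \<and>
                         range X \<subseteq> closure (range A))"

definition opnormA :: "('a::complex_inner \<Rightarrow> 'a) \<Rightarrow> ('a \<Rightarrow> 'a) \<Rightarrow> real" where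
  "opnormA A T = Sup {normA A (T x) | x. normA A x = 1}"

definition omegaA :: "('a::complex_inner \<Rightarrow> 'a) \<Rightarrow> ('a \<Rightarrow> 'a) \<Rightarrow> real" where
  "omegaA A T = Sup {cmod (ipA A (T x) x) | x. normA A x = 1}"

section \<open>The operator diag(A,A) on H (+) H, written out componentwise\<close>

definition ipAA :: "('a::complex_inner \<Rightarrow> 'a) \<Rightarrow> 'a \<times> 'a \<Rightarrow> 'a \<times> 'a \<Rightarrow> complex" where
  "ipAA A u v = ipA A (fst u) (fst v) + ipA A (snd u) (snd v)"

definition normAA :: "('a::complex_inner \<Rightarrow> 'a) \<Rightarrow> 'a \<times> 'a \<Rightarrow> real" where
  "normAA A u = sqrt (Re (ipAA A u u))"

definition omegaAA :: "('a::complex_inner \<Rightarrow> 'a) \<Rightarrow> ('a \<times> 'a \<Rightarrow> 'a \<times> 'a) \<Rightarrow> real" where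
  "omegaAA A T = Sup {cmod (ipAA A (T u) u) | u. normAA A u = 1}"

definition block :: "('a::complex_inner \<Rightarrow> 'a) \<Rightarrow> ('a \<Rightarrow> 'a) \<Rightarrow> ('a \<Rightarrow> 'a) \<Rightarrow> ('a \<Rightarrow> 'a)
                     \<Rightarrow> 'a \<times> 'a \<Rightarrow> 'a \<times> 'a" where
  "block P Q R S u = (P (fst u) + Q (snd u), R (fst u) + S (snd u))"

end

theory Submission
  imports Defs
begin

locale sip =
  fixes B :: "'v::ab_group_add \<Rightarrow> 'v \<Rightarrow> complex" and sc :: "complex \<Rightarrow> 'v \<Rightarrow> 'v"
  assumes add_l: "B (x + y) z = B x z + B y z"
    and sc_l: "B (sc c x) y = c * B x y"
    and herm: "B x y = cnj (B y x)"
    and pos: "0 \<le> Re (B x x)"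
begin

definition nB where "nB x = sqrt (Re (B x x))"

lemma add_r: "B x (y + z) = B x y + B x z"
  by (metis add_l complex_cnj_add herm)

lemma sc_r: "B x (sc c y) = cnj c * B x y"
  by (metis complex_cnj_cnj complex_cnj_mult herm sc_l)

lemma zero_l[simp]: "B 0 y = 0"
  using add_l[of 0 0 y] by simp

lemma zero_r[simp]: "B x 0 = 0"
  using add_r[of x 0 0] by simp

lemma minus_l: "B (- x) y = - B x y"
  using add_l[of x "-x" y] by (simp add: add.commute eq_neg_iff_add_eq_0)

lemma minus_r: "B x (- y) = - B x y"
  using add_r[of x y "-y"] by (simp add: add.commute eq_neg_iff_add_eq_0)

lemma diff_l: "B (x - y) z = B x z - B y z"
  by (metis add_l minus_l diff_conv_add_uminus)

lemma diff_r: "B x (y - z) = B x y - B x z"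
  by (metis add_r minus_r diff_conv_add_uminus)

lemma self_im: "Im (B x x) = 0"
proof -
  have "Im (B x x) = Im (cnj (B x x))" using herm[of x x] by metis
  thus ?thesis by simp
qed

lemma self_real: "B x x = complex_of_real (Re (B x x))"
  using self_im by (simp add: complex_eq_iff)

lemma nB_ge0: "0 \<le> nB x"
  using pos[of x] by (simp add: nB_def)

lemma nB_sq: "(nB x)^2 = Re (B x x)"
  using pos[of x] by (simp add: nB_def)

lemma nB_sq': "complex_of_real ((nB x)^2) = B x x"
  using nB_sq self_real by simp

lemma cnj_B: "cnj (B x y) = B y x"
  by (metis herm)

lemma CS_sq: "(cmod (B x y))^2 \<le> Re (B x x) * Re (B y y)"
proof -
  define b where "b = B x y"
  define p where "p = Re (B x x)"
  define s where "s = Re (B y y)"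
  have key: "0 \<le> p - 2 * t * (cmod b)^2 + t^2 * (cmod b)^2 * s" for t :: real
  proof -
    let ?v = "x - sc (complex_of_real t * b) y"
    have 1: "B x x = complex_of_real p" using self_real p_def by simp
    have 2: "B y y = complex_of_real s" using self_real s_def by simp
    have 3: "B y x = cnj b" using b_def cnj_B by simp
    have 4: "b * cnj b = complex_of_real ((cmod b)^2)" using complex_norm_square[of b] by simp
    have 5: "cnj b * b = complex_of_real ((cmod b)^2)" using 4 by (simp add: mult.commute)
    have "B ?v ?v = B x x - cnj (complex_of_real t * b) * B x y - (complex_of_real t * b) * B y x
             + (complex_of_real t * b) * (cnj (complex_of_real t * b) * B y y)"
      by (simp add: diff_l diff_r sc_l sc_r) (simp add: algebra_simps)
    also have "\<dots> = complex_of_real p - complex_of_real t * (cnj b * b) - complex_of_real t * (b * cnj b)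
             + complex_of_real t * complex_of_real t * (b * cnj b) * complex_of_real s"
      unfolding 1 2 3 b_def[symmetric] by (simp add: ac_simps)
    also have "\<dots> = complex_of_real (p - 2 * t * (cmod b)^2 + t^2 * (cmod b)^2 * s)"
      unfolding 4 5 by (simp add: power2_eq_square algebra_simps)
    finally have "Re (B ?v ?v) = p - 2 * t * (cmod b)^2 + t^2 * (cmod b)^2 * s" by simp
    thus ?thesis using pos[of ?v] by simp
  qed
  have p0: "0 \<le> p" using pos p_def by simp
  have s0: "0 \<le> s" using pos s_def by simp
  show ?thesis
  proof (cases "s = 0")
    case True
    show ?thesis
    proof (rule ccontr)
      assume "\<not> ?thesis"
      hence bpos: "0 < (cmod b)^2" using b_def p_def s_def p0 s0 by (auto simp: mult_nonneg_nonneg)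
      have "0 \<le> p - 2 * ((p + 1) / (cmod b)^2) * (cmod b)^2" using key[of "(p+1)/(cmod b)^2"] True by simp
      also have "\<dots> = p - 2 * (p + 1)" using bpos by simp
      finally show False using p0 by simp
    qed
  next
    case False
    hence sp: "0 < s" using s0 by simp
    have "0 \<le> p - 2 * (1/s) * (cmod b)^2 + (1/s)^2 * (cmod b)^2 * s" using key[of "1/s"] .
    also have "\<dots> = p - (cmod b)^2 / s" using sp by (simp add: power2_eq_square field_simps)
    finally have "(cmod b)^2 / s \<le> p" by simp
    hence "(cmod b)^2 \<le> p * s" using sp by (simp add: field_simps)
    thus ?thesis using b_def p_def s_def by simp
  qed
qed

lemma CS: "cmod (B x y) \<le> nB x * nB y"
proof -
  have "(cmod (B x y))^2 \<le> (nB x * nB y)^2"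
    using CS_sq by (simp add: power_mult_distrib nB_sq)
  thus ?thesis using nB_ge0 by (meson mult_nonneg_nonneg power2_le_imp_le)
qed

lemma nB_add: "nB (x + y) \<le> nB x + nB y"
proof -
  have "Re (B (x+y) (x+y)) = Re (B x x) + Re (B x y) + Re (B y x) + Re (B y y)"
    by (simp add: add_l add_r)
  also have "Re (B x y) \<le> nB x * nB y" using CS complex_Re_le_cmod order_trans by blast
  also have "Re (B y x) \<le> nB x * nB y" using CS complex_Re_le_cmod order_trans mult.commute by metis
  finally have "(nB (x+y))^2 \<le> (nB x + nB y)^2" unfolding nB_sq[symmetric] by (simp add: power2_eq_square algebra_simps)
  thus ?thesis using nB_ge0 by (meson add_nonneg_nonneg power2_le_imp_le)
qed

lemma B_sc_sc: "B (sc c x) (sc c x) = complex_of_real ((cmod c)^2) * B x x"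
proof -
  have "B (sc c x) (sc c x) = (c * cnj c) * B x x" by (simp add: sc_l sc_r mult.assoc)
  also have "c * cnj c = complex_of_real ((cmod c)^2)" using complex_norm_square[of c] by simp
  finally show ?thesis .
qed

lemma nB_sc: "nB (sc c x) = cmod c * nB x"
proof -
  have "Re (B (sc c x) (sc c x)) = (cmod c)^2 * Re (B x x)" by (simp add: B_sc_sc)
  thus ?thesis by (simp add: nB_def real_sqrt_mult)
qed

lemma buzano:
  assumes e: "nB e = 1"
  shows "cmod (B x e * B e y) \<le> (nB x * nB y + cmod (B x y)) / 2"
proof -
  define c where "c = 2 * B y e"
  define v where "v = sc c e - y"
  have ee: "B e e = 1" using nB_sq'[of e] e by simp
  have "B v v = c * cnj c * B e e - c * B e y - cnj c * B y e + B y y"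
    by (simp add: v_def diff_l diff_r sc_l sc_r algebra_simps)
  also have "\<dots> = B y y"
    using ee by (simp add: c_def cnj_B algebra_simps)
  finally have vv: "nB v = nB y" by (simp add: nB_def)
  have "B x v = cnj c * B x e - B x y" by (simp add: v_def diff_r sc_r)
  hence "2 * (B x e * B e y) = B x y + B x v" by (simp add: c_def cnj_B algebra_simps)
  hence "2 * cmod (B x e * B e y) \<le> cmod (B x y) + cmod (B x v)"
    by (metis norm_mult norm_numeral norm_triangle_ineq of_real_numeral)
  also have "cmod (B x v) \<le> nB x * nB y" using CS[of x v] vv by simp
  finally show ?thesis by simp
qed

end

interpretation cip: sip "cinner :: 'a::complex_inner \<Rightarrow> 'a \<Rightarrow> complex" scaleC
  by unfold_locales (auto simp: cinner_add_left cinner_scaleC_left cinner_ge_zero intro: cinner_commute)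

lemma norm_is_nB: "norm x = cip.nB x"
  by (simp add: cip.nB_def norm_eq_sqrt_cinner)

lemma scaleC_zero_r[simp]: "scaleC c (0::'a::complex_vector) = 0"
  using scaleC_add_right[of c "0::'a" 0] by simp

lemma scaleC_zero_l[simp]: "scaleC 0 (x::'a::complex_vector) = 0"
  using scaleC_add_left[of 0 0 x] by simp

lemma scaleC_minus_r: "scaleC c (- x) = - scaleC c (x::'a::complex_vector)"
  using scaleC_add_right[of c x "-x"] by (simp add: add.commute eq_neg_iff_add_eq_0)

lemma scaleC_diff_r: "scaleC c (x - y) = scaleC c x - scaleC c (y::'a::complex_vector)"
  by (metis diff_conv_add_uminus scaleC_add_right scaleC_minus_r)

lemma norm_scaleC: "norm (scaleC c x) = cmod c * norm (x::'a::complex_inner)"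
  by (simp add: norm_is_nB cip.nB_sc)

lemma norm_sq_cinner: "(norm x)^2 = Re (cinner x (x::'a::complex_inner))"
  by (simp add: norm_is_nB cip.nB_sq)

lemma cinner_self_norm: "cinner x x = complex_of_real ((norm (x::'a::complex_inner))^2)"
  by (metis norm_is_nB cip.nB_sq')

lemma cinner_CS: "cmod (cinner x y) \<le> norm x * norm (y::'a::complex_inner)"
  by (simp add: norm_is_nB cip.CS)

lemma cinner_scaleR_left: "cinner (scaleR r x) y = complex_of_real r * cinner x (y::'a::complex_inner)"
  by (simp add: scaleR_scaleC cinner_scaleC_left)

lemma cinner_scaleR_right: "cinner x (scaleR r y) = complex_of_real r * cinner x (y::'a::complex_inner)"
  by (simp add: scaleR_scaleC cip.sc_r)

lemma bb_cinner: "bounded_bilinear (cinner :: 'a::complex_inner \<Rightarrow> 'a \<Rightarrow> complex)"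
proof
  fix a a' b b' :: 'a and r :: real
  show "cinner (a + a') b = cinner a b + cinner a' b" by (rule cinner_add_left)
  show "cinner a (b + b') = cinner a b + cinner a b'" by (rule cip.add_r)
  show "cinner (r *\<^sub>R a) b = r *\<^sub>R cinner a b" by (simp add: cinner_scaleR_left scaleR_conv_of_real)
  show "cinner a (r *\<^sub>R b) = r *\<^sub>R cinner a b" by (simp add: cinner_scaleR_right scaleR_conv_of_real)
next
  show "\<exists>K. \<forall>a b::'a. norm (cinner a b) \<le> norm a * norm b * K"
    by (rule exI[of _ 1]) (simp add: cinner_CS)
qed

lemma cinner_ext: "(\<And>x. cinner x a = cinner x b) \<Longrightarrow> a = (b::'a::complex_inner)"
proof -
  assume h: "\<And>x. cinner x a = cinner x b"
  have "cinner (a - b) (a - b) = 0" using h[of "a - b"] by (simp add: cip.diff_r)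
  thus ?thesis by (metis cinner_eq_zero_iff eq_iff_diff_eq_0)
qed

lemma cinner_ext_l: "(\<And>x. cinner a x = cinner b x) \<Longrightarrow> a = (b::'a::complex_inner)"
  by (rule cinner_ext) (metis cinner_commute)

lemma bcl_add: "bounded_clinear T \<Longrightarrow> T (x + y) = T x + T y"
  by (simp add: bounded_clinear_def)

lemma bcl_sc: "bounded_clinear T \<Longrightarrow> T (scaleC c x) = scaleC c (T x)"
  by (simp add: bounded_clinear_def)

lemma bcl_bl: "bounded_clinear T \<Longrightarrow> bounded_linear T"
  unfolding bounded_clinear_def
  by (auto intro!: bounded_linear_intro simp: scaleR_scaleC)

lemma bcl_bound: "bounded_clinear T \<Longrightarrow> \<exists>K\<ge>0. \<forall>x. norm (T x) \<le> K * norm x"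
  unfolding bounded_clinear_def
  by (metis (no_types, opaque_lifting) mult.commute norm_ge_zero order.trans mult_nonneg_nonneg
        le_cases mult_right_mono mult_nonpos_nonneg order_refl)

lemma bcl_zero: "bounded_clinear T \<Longrightarrow> T 0 = 0"
  using bcl_bl linear_0 bounded_linear.linear by blast

lemma bcl_diff: "bounded_clinear T \<Longrightarrow> T (x - y) = T x - T y"
  using bcl_bl linear_diff bounded_linear.linear by blast

lemma bcl_minus: "bounded_clinear T \<Longrightarrow> T (- x) = - T x"
  using bcl_bl linear_neg bounded_linear.linear by blast

lemma bcl_scR: "bounded_clinear T \<Longrightarrow> T (scaleR r x) = scaleR r (T x)"
  using bcl_bl linear_scale bounded_linear.linear by blast

lemma bcl_id: "bounded_clinear (\<lambda>x::'a::complex_inner. x)"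
  unfolding bounded_clinear_def by (auto intro: exI[of _ 1])

lemma bcl_comp: "bounded_clinear S \<Longrightarrow> bounded_clinear T \<Longrightarrow> bounded_clinear (\<lambda>x. S (T x))"
proof -
  assume s: "bounded_clinear S" and t: "bounded_clinear T"
  obtain K1 where K1: "K1 \<ge> 0" "\<forall>x. norm (S x) \<le> K1 * norm x" using bcl_bound[OF s] by blast
  obtain K2 where K2: "K2 \<ge> 0" "\<forall>x. norm (T x) \<le> K2 * norm x" using bcl_bound[OF t] by blast
  have "norm (S (T x)) \<le> norm x * (K1 * K2)" for x
  proof -
    have "norm (S (T x)) \<le> K1 * norm (T x)" using K1 by blast
    also have "\<dots> \<le> K1 * (K2 * norm x)" using K1 K2 by (simp add: mult_left_mono)
    finally show ?thesis by (simp add: ac_simps)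
  qed
  thus ?thesis using s t unfolding bounded_clinear_def by auto
qed

section \<open>Projection theorem\<close>

lemma (in sip) expand:
  "Re (B (x - sc (complex_of_real t * B x y) y) (x - sc (complex_of_real t * B x y) y))
     = Re (B x x) - 2 * t * (cmod (B x y))^2 + t^2 * (cmod (B x y))^2 * Re (B y y)"
proof -
  define b where "b = B x y"
  define p where "p = Re (B x x)"
  define s where "s = Re (B y y)"
  let ?v = "x - sc (complex_of_real t * b) y"
  have 1: "B x x = complex_of_real p" using self_real p_def by simp
  have 2: "B y y = complex_of_real s" using self_real s_def by simp
  have 3: "B y x = cnj b" using b_def cnj_B by simp
  have 4: "b * cnj b = complex_of_real ((cmod b)^2)" using complex_norm_square[of b] by simp
  have 5: "cnj b * b = complex_of_real ((cmod b)^2)" using 4 by (simp add: mult.commute)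
  have "B ?v ?v = B x x - cnj (complex_of_real t * b) * B x y - (complex_of_real t * b) * B y x
           + (complex_of_real t * b) * (cnj (complex_of_real t * b) * B y y)"
    by (simp add: diff_l diff_r sc_l sc_r) (simp add: algebra_simps)
  also have "\<dots> = complex_of_real p - complex_of_real t * (cnj b * b) - complex_of_real t * (b * cnj b)
           + complex_of_real t * complex_of_real t * (b * cnj b) * complex_of_real s"
    unfolding 1 2 3 b_def[symmetric] by (simp add: ac_simps)
  also have "\<dots> = complex_of_real (p - 2 * t * (cmod b)^2 + t^2 * (cmod b)^2 * s)"
    unfolding 4 5 by (simp add: power2_eq_square algebra_simps)
  finally show ?thesis by (simp add: b_def p_def s_def)
qed

lemma (in sip) orth_from_min:
  assumes "\<And>t::real. Re (B x x) \<le> Re (B (x - sc (complex_of_real t * B x y) y) (x - sc (complex_of_real t * B x y) y))"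
  shows "B x y = 0"
proof -
  define s where "s = Re (B y y)"
  define q where "q = (cmod (B x y))^2"
  have s0: "0 \<le> s" using pos s_def by simp
  define t where "t = 1 / (s + 1)"
  have t0: "0 < t" using s0 t_def by simp
  have "t * (s + 1) = 1" using s0 t_def by simp
  hence "t * s + t = 1" by (simp add: algebra_simps)
  hence ts: "t * s \<le> 1" using t0 by linarith
  have "0 \<le> - 2 * t * q + t^2 * q * s" using assms[of t] expand[of x t y] q_def s_def by simp
  also have "\<dots> = t * q * (t * s - 2)" by (simp add: power2_eq_square algebra_simps)
  finally have "0 \<le> t * q * (t * s - 2)" .
  moreover have "q \<ge> 0" using q_def by simp
  ultimately have "q \<le> 0" using t0 ts
    by (smt (verit) mult_pos_neg zero_less_mult_iff)
  thus ?thesis using q_def by simp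
qed

lemma parallelogram:
  "(norm (a + b))^2 + (norm (a - b))^2 = 2 * (norm a)^2 + 2 * (norm (b::'a::complex_inner))^2"
  unfolding norm_sq_cinner
  by (simp add: cinner_add_left cip.add_r cip.diff_l cip.diff_r)

lemma projection:
  fixes M :: "'a::chilbert_space set"
  assumes cl: "closed M" and z: "0 \<in> M" and ad: "\<And>x y. x \<in> M \<Longrightarrow> y \<in> M \<Longrightarrow> x + y \<in> M"
    and sc: "\<And>c x. x \<in> M \<Longrightarrow> scaleC c x \<in> M"
  shows "\<exists>m\<in>M. \<forall>w\<in>M. cinner (y - m) w = 0"
proof -
  have mi: "x \<in> M \<Longrightarrow> - x \<in> M" for x using sc[of x "-1"] scaleR_scaleC[of "-1" x] by simp
  have sR: "x \<in> M \<Longrightarrow> scaleR r x \<in> M" for x r using sc by (simp add: scaleR_scaleC)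
  define S where "S = (\<lambda>m. (norm (y - m))^2) ` M"
  define D where "D = Inf S"
  have Sne: "S \<noteq> {}" using z S_def by auto
  have Sbdd: "bdd_below S" unfolding S_def by (rule bdd_belowI[of _ 0]) auto
  have low: "m \<in> M \<Longrightarrow> D \<le> (norm (y - m))^2" for m
    unfolding D_def S_def by (rule cInf_lower) (use Sbdd S_def in auto)
  have "\<exists>m\<in>M. (norm (y - m))^2 < D + 1 / real (Suc n)" for n
  proof -
    have "Inf S < D + 1 / real (Suc n)" using D_def by simp
    then obtain v where "v \<in> S" "v < D + 1 / real (Suc n)" using cInf_lessD[OF Sne] by blast
    thus ?thesis using S_def by auto
  qed
  then obtain f where f: "\<And>n. f n \<in> M" "\<And>n. (norm (y - f n))^2 < D + 1 / real (Suc n)" by metis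
  have dist_bd: "(norm (f n - f k))^2 \<le> 2 / real (Suc n) + 2 / real (Suc k)" for n k
  proof -
    let ?a = "y - f n" and ?b = "y - f k"
    have mid: "scaleR (1/2) (f n + f k) \<in> M" using f ad sR by blast
    have "?a + ?b = scaleR 2 (y - scaleR (1/2) (f n + f k))"
      by (simp add: algebra_simps scaleR_add_right scaleR_2)
    hence "(norm (?a + ?b))^2 = 4 * (norm (y - scaleR (1/2) (f n + f k)))^2"
      by (simp add: power2_eq_square)
    hence "4 * D \<le> (norm (?a + ?b))^2" using low[OF mid] by simp
    moreover have "?a - ?b = f k - f n" by simp
    moreover have "norm (f k - f n) = norm (f n - f k)" by (rule norm_minus_commute)
    ultimately show ?thesis using parallelogram[of ?a ?b] f(2)[of n] f(2)[of k] by simp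
  qed
  have "Cauchy f"
  proof (rule metric_CauchyI)
    fix e :: real assume e: "0 < e"
    obtain N :: nat where N: "4 / (e^2) < real N" using reals_Archimedean2 by blast
    show "\<exists>N. \<forall>m\<ge>N. \<forall>n\<ge>N. dist (f m) (f n) < e"
    proof (intro exI allI impI)
      fix m n assume mN: "N \<le> m" and nN: "N \<le> n"
      have e2: "0 < e^2" using e by simp
      have "4 / e^2 < real (Suc m)" using N mN by linarith
      hence a1: "2 / real (Suc m) < e^2 / 2" using e2 by (simp add: field_simps)
      have "4 / e^2 < real (Suc n)" using N nN by linarith
      hence a2: "2 / real (Suc n) < e^2 / 2" using e2 by (simp add: field_simps)
      have "(norm (f m - f n))^2 < e^2" using dist_bd[of m n] a1 a2 by linarith
      hence "norm (f m - f n) < e" using e by (smt (verit) norm_ge_zero power2_le_imp_le)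
      thus "dist (f m) (f n) < e" by (simp add: dist_norm)
    qed
  qed
  then obtain m where lim: "f \<longlonglongrightarrow> m" using Cauchy_convergent_iff convergent_def by blast
  have mM: "m \<in> M" using closed_sequentially[OF cl] f(1) lim by blast
  have "(\<lambda>n. (norm (y - f n))^2) \<longlonglongrightarrow> (norm (y - m))^2"
    by (intro tendsto_intros lim)
  moreover have "(\<lambda>n. D + 1 / real (Suc n)) \<longlonglongrightarrow> D"
  proof -
    have "(\<lambda>n. D + inverse (real (Suc n))) \<longlonglongrightarrow> D + 0"
      by (intro tendsto_add tendsto_const LIMSEQ_inverse_real_of_nat)
    thus ?thesis by (simp add: inverse_eq_divide)
  qed
  ultimately have "(norm (y - m))^2 \<le> D"
    by (rule LIMSEQ_le) (use f(2) less_imp_le in blast)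
  hence minm: "(norm (y - m))^2 \<le> (norm (y - w))^2" if "w \<in> M" for w using low[OF that] by linarith
  show ?thesis
  proof (intro bexI[OF _ mM] ballI)
    fix w assume wM: "w \<in> M"
    show "cinner (y - m) w = 0"
    proof (rule cip.orth_from_min)
      fix t :: real
      let ?c = "complex_of_real t * cinner (y - m) w"
      have "m + scaleC ?c w \<in> M" using ad[OF mM sc[OF wM]] .
      hence "(norm (y - m))^2 \<le> (norm (y - (m + scaleC ?c w)))^2" using minm by blast
      moreover have "y - (m + scaleC ?c w) = (y - m) - scaleC ?c w" by simp
      ultimately show "Re (cinner (y - m) (y - m)) \<le> Re (cinner (y - m - scaleC ?c w) (y - m - scaleC ?c w))"
        by (simp add: norm_sq_cinner)
    qed
  qed
qed

section \<open>Riesz representation and adjoints\<close>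

lemma riesz:
  fixes f :: "'a::chilbert_space \<Rightarrow> complex"
  assumes add: "\<And>x y. f (x + y) = f x + f y" and sc: "\<And>c x. f (scaleC c x) = c * f x"
    and bnd: "\<And>x. cmod (f x) \<le> K * norm x"
  shows "\<exists>w. \<forall>x. f x = cinner x w"
proof -
  have bl: "bounded_linear f"
    by (rule bounded_linear_intro[of _ K])
       (auto simp: add sc scaleR_scaleC scaleR_conv_of_real bnd mult.commute)
  have f0: "f 0 = 0" using bl by (simp add: linear_simps)
  have fd: "f (x - y) = f x - f y" for x y using bl by (simp add: linear_simps)
  show ?thesis
  proof (cases "\<forall>x. f x = 0")
    case True then show ?thesis by (intro exI[of _ 0]) simp
  next
    case False then obtain x0 where x0: "f x0 \<noteq> 0" by blast
    define M where "M = {x. f x = 0}"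
    have cl: "closed M" unfolding M_def
      by (intro closed_Collect_eq continuous_on_const linear_continuous_on bl)
    have "\<exists>m\<in>M. \<forall>w\<in>M. cinner (x0 - m) w = 0"
      by (rule projection[OF cl]) (auto simp: M_def f0 add sc)
    then obtain m where m: "m \<in> M" "\<And>w. w \<in> M \<Longrightarrow> cinner (x0 - m) w = 0" by blast
    define p where "p = x0 - m"
    have fp: "f p = f x0" using m(1) by (simp add: p_def fd M_def)
    have pnz: "p \<noteq> 0" using fp x0 f0 by auto
    have pp: "cinner p p \<noteq> 0" using pnz cinner_eq_zero_iff by blast
    have ppr: "cnj (cinner p p) = cinner p p" by (simp add: cip.cnj_B)
    define w where "w = scaleC (cnj (f p / cinner p p)) p"
    show ?thesis
    proof (intro exI allI)
      fix x
      define c where "c = f x / f p"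
      have "f (x - scaleC c p) = 0" using fp x0 by (simp add: fd sc c_def)
      hence "cinner p (x - scaleC c p) = 0" using m(2) p_def M_def by simp
      hence "cinner p x = cnj c * cinner p p" by (simp add: cip.diff_r cip.sc_r)
      hence "cnj (cinner p x) = c * cinner p p" using ppr by simp
      hence "cinner x p = c * cinner p p" by (simp add: cip.cnj_B)
      hence "f x = cinner x p * f p / cinner p p" using pp fp x0 by (simp add: c_def field_simps)
      moreover have "cinner x w = (f p / cinner p p) * cinner x p" by (simp add: w_def cip.sc_r)
      ultimately show "f x = cinner x w" by simp
    qed
  qed
qed

lemma adj_exists:
  assumes "bounded_clinear (T::'a::chilbert_space \<Rightarrow> 'a)"
  shows "\<exists>S. \<forall>x y. cinner (T x) y = cinner x (S y)"
proof -
  obtain K where K: "K \<ge> 0" "\<And>x. norm (T x) \<le> K * norm x" using bcl_bound[OF assms] by blast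
  have "\<forall>y. \<exists>w. \<forall>x. cinner (T x) y = cinner x w"
  proof
    fix y
    show "\<exists>w. \<forall>x. cinner (T x) y = cinner x w"
    proof (rule riesz[where K = "K * norm y"])
      fix x
      have "cmod (cinner (T x) y) \<le> norm (T x) * norm y" by (rule cinner_CS)
      also have "\<dots> \<le> K * norm x * norm y" using K by (simp add: mult_right_mono)
      finally show "cmod (cinner (T x) y) \<le> K * norm y * norm x" by (simp add: ac_simps)
    qed (auto simp: bcl_add[OF assms] bcl_sc[OF assms] cinner_add_left cinner_scaleC_left)
  qed
  thus ?thesis by metis
qed

lemma adj_prop:
  assumes "bounded_clinear (T::'a::chilbert_space \<Rightarrow> 'a)"
  shows "cinner (T x) y = cinner x (adj T y)"
proof -
  let ?P = "\<lambda>S. \<forall>x y. cinner (T x) y = cinner x (S y)"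
  have ex1: "\<exists>!S. ?P S"
  proof -
    obtain S where S: "?P S" using adj_exists[OF assms] by blast
    moreover have "S' = S" if "?P S'" for S'
    proof
      fix y show "S' y = S y" using that S by (intro cinner_ext) metis
    qed
    ultimately show ?thesis by blast
  qed
  have "?P (adj T)" unfolding adj_def by (rule theI'[OF ex1])
  thus ?thesis by blast
qed

lemma adj_prop2:
  assumes "bounded_clinear (T::'a::chilbert_space \<Rightarrow> 'a)"
  shows "cinner (adj T y) x = cinner y (T x)"
  by (metis adj_prop[OF assms] cip.cnj_B)

lemma adj_add:
  assumes "bounded_clinear (T::'a::chilbert_space \<Rightarrow> 'a)"
  shows "adj T (y + z) = adj T y + adj T z"
  by (rule cinner_ext) (simp add: adj_prop[OF assms, symmetric] cip.add_r)

lemma adj_sc: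
  assumes "bounded_clinear (T::'a::chilbert_space \<Rightarrow> 'a)"
  shows "adj T (scaleC c y) = scaleC c (adj T y)"
  by (rule cinner_ext) (simp add: adj_prop[OF assms, symmetric] cip.sc_r)

lemma pos_bcl: "positive_op A \<Longrightarrow> bounded_clinear A"
  by (simp add: positive_op_def)

lemma pos_herm:
  assumes "positive_op (A::'a::complex_inner \<Rightarrow> 'a)"
  shows "cinner (A x) y = cinner x (A y)"
proof -
  have bA: "bounded_clinear A" using assms by (simp add: positive_op_def)
  have im: "Im (cinner (A v) v) = 0" for v using assms by (simp add: positive_op_def)
  define s where "s u v = cinner (A u) v" for u v
  have sadd: "s (u + u') (v + v') = s u v + s u v' + s u' v + s u' v'" for u u' v v'
    by (simp add: s_def bcl_add[OF bA] cinner_add_left cip.add_r)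
  have ssc: "s (scaleC c u) v = c * s u v" for c u v
    by (simp add: s_def bcl_sc[OF bA] cinner_scaleC_left)
  have ssc2: "s u (scaleC c v) = cnj c * s u v" for c u v
    by (simp add: s_def cip.sc_r)
  have i1: "Im (s x y + s y x) = 0"
    using im[of "x + y"] im[of x] im[of y] sadd[of x y x y] by (simp add: s_def)
  have i2: "Im (- \<i> * s x y + \<i> * s y x) = 0"
    using im[of "x + scaleC \<i> y"] im[of x] im[of y] sadd[of x "scaleC \<i> y" x "scaleC \<i> y"]
    by (simp add: s_def[symmetric] ssc ssc2)
  have "s y x = cnj (s x y)" using i1 i2 by (simp add: complex_eq_iff)
  hence "cnj (s y x) = s x y" by simp
  thus ?thesis by (simp add: s_def cip.cnj_B)
qed

lemma sip_ipA:
  assumes "positive_op (A::'a::complex_inner \<Rightarrow> 'a)"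
  shows "sip (ipA A) scaleC"
proof -
  have bA: "bounded_clinear A" using assms by (simp add: positive_op_def)
  show ?thesis
  proof
    fix x y z :: 'a and c
    show "ipA A (x + y) z = ipA A x z + ipA A y z" by (simp add: ipA_def bcl_add[OF bA] cinner_add_left)
    show "ipA A (scaleC c x) y = c * ipA A x y" by (simp add: ipA_def bcl_sc[OF bA] cinner_scaleC_left)
    show "ipA A x y = cnj (ipA A y x)" by (simp add: ipA_def pos_herm[OF assms] cip.cnj_B)
    show "0 \<le> Re (ipA A x x)" using assms by (simp add: ipA_def positive_op_def)
  qed
qed

section \<open>Uniform boundedness\<close>

lemma ubp:
  fixes F :: "('a::{real_normed_vector,complete_space} \<Rightarrow> 'b::real_normed_vector) set"
  assumes bl: "\<And>f. f \<in> F \<Longrightarrow> bounded_linear f" and pw: "\<And>x. \<exists>B. \<forall>f\<in>F. norm (f x) \<le> B"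
  shows "\<exists>C. \<forall>f\<in>F. \<forall>x. norm (f x) \<le> C * norm x"
proof -
  define E where "E n = (\<Inter>f\<in>F. {x. norm (f x) \<le> real n})" for n :: nat
  have clE: "closed (E n)" for n
    unfolding E_def
    by (intro closed_INT ballI closed_Collect_le continuous_on_const continuous_on_norm
          linear_continuous_on bl)
  have cover: "\<Union> (range E) = UNIV"
  proof -
    have "x \<in> \<Union> (range E)" for x
    proof -
      obtain B where B: "\<forall>f\<in>F. norm (f x) \<le> B" using pw by blast
      obtain n :: nat where "B \<le> real n" using real_arch_simple by blast
      hence "x \<in> E n" using B unfolding E_def by force
      thus ?thesis by blast
    qed
    thus ?thesis by blast
  qed
  have "\<exists>n. interior (E n) \<noteq> {}"
  proof (rule ccontr)
    assume "\<not> ?thesis"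
    hence "\<forall>n. interior (E n) = {}" by blast
    hence "Met_TC.mtopology interior_of \<Union> (range E) = {}"
      by (intro Met_TC.metric_Baire_category_alt) (auto simp: complete_UNIV clE)
    thus False using cover by simp
  qed
  then obtain n x0 where "x0 \<in> interior (E n)" by blast
  then obtain r where r: "r > 0" "ball x0 r \<subseteq> E n" using mem_interior by blast
  show ?thesis
  proof (intro exI[of _ "4 * real n / r"] ballI allI)
    fix f x assume fF: "f \<in> F"
    have lf: "linear f" using bl[OF fF] bounded_linear.linear by blast
    show "norm (f x) \<le> 4 * real n / r * norm x"
    proof (cases "x = 0")
      case True thus ?thesis using lf by (simp add: linear_0)
    next
      case False
      hence nx: "norm x > 0" by simp
      define t where "t = r / (2 * norm x)"
      have t0: "t > 0" using r nx t_def by simp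
      have "dist x0 (x0 + scaleR t x) = r / 2" using nx r by (simp add: dist_norm t_def)
      hence "x0 + scaleR t x \<in> E n" using r by auto
      hence 1: "norm (f (x0 + scaleR t x)) \<le> real n" using fF E_def by blast
      have "x0 \<in> E n" using r by auto
      hence 2: "norm (f x0) \<le> real n" using fF E_def by blast
      have "f (x0 + scaleR t x) - f x0 = scaleR t (f x)" using lf by (simp add: linear_add linear_scale)
      hence "t * norm (f x) = norm (f (x0 + scaleR t x) - f x0)" using t0 by simp
      also have "\<dots> \<le> 2 * real n" using 1 2 norm_triangle_ineq4[of "f (x0 + scaleR t x)" "f x0"] by linarith
      finally have "r / (2 * norm x) * norm (f x) \<le> 2 * real n" by (simp add: t_def)
      thus ?thesis using nx r by (simp add: field_simps)
    qed
  qed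
qed

section \<open>The A-adjoint\<close>

lemma bcl_scaleC: "bounded_clinear (scaleC c :: 'a::complex_inner \<Rightarrow> 'a)"
  unfolding bounded_clinear_def
  by (auto simp: scaleC_add_right scaleC_scaleC mult.commute norm_scaleC intro: exI[of _ "cmod c"])

lemma cinner_cont_l: "continuous_on UNIV (\<lambda>w::'a::complex_inner. cinner w z)"
  by (intro linear_continuous_on bounded_bilinear.bounded_linear_left[OF bb_cinner])

lemma cinner_cont_r: "continuous_on UNIV (\<lambda>w::'a::complex_inner. cinner z w)"
  by (intro linear_continuous_on bounded_bilinear.bounded_linear_right[OF bb_cinner])

context
  fixes A :: "'a::chilbert_space \<Rightarrow> 'a"
  assumes posA: "positive_op A"
begin

lemma bA: "bounded_clinear A" using posA by (simp add: positive_op_def)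

lemma rA_add: "a \<in> range A \<Longrightarrow> b \<in> range A \<Longrightarrow> a + b \<in> range A"
proof -
  assume "a \<in> range A" "b \<in> range A"
  then obtain s t where "a = A s" "b = A t" by blast
  hence "a + b = A (s + t)" by (simp add: bcl_add[OF bA])
  thus ?thesis by simp
qed

lemma rA_sc: "a \<in> range A \<Longrightarrow> scaleC c a \<in> range A"
proof -
  assume "a \<in> range A"
  then obtain s where "a = A s" by blast
  hence "scaleC c a = A (scaleC c s)" by (simp add: bcl_sc[OF bA])
  thus ?thesis by simp
qed

lemma scaleC_cont: "continuous (at x) (scaleC c :: 'a \<Rightarrow> 'a)"
  by (intro linear_continuous_at bcl_bl bcl_scaleC)

lemma K_add1: "a \<in> range A \<Longrightarrow> y \<in> closure (range A) \<Longrightarrow> a + y \<in> closure (range A)"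
proof -
  assume a: "a \<in> range A" and y: "y \<in> closure (range A)"
  have "range A \<subseteq> (\<lambda>y. a + y) -` closure (range A)"
  proof
    fix z assume "z \<in> range A"
    hence "a + z \<in> range A" by (rule rA_add[OF a])
    thus "z \<in> (\<lambda>y. a + y) -` closure (range A)" using closure_subset by fastforce
  qed
  moreover have "closed ((\<lambda>y. a + y) -` closure (range A))"
    by (intro continuous_closed_vimage closed_closure continuous_add continuous_const continuous_ident)
  ultimately have "closure (range A) \<subseteq> (\<lambda>y. a + y) -` closure (range A)"
    by (rule closure_minimal)
  thus ?thesis using y by blast
qed

lemma K_add: "x \<in> closure (range A) \<Longrightarrow> y \<in> closure (range A) \<Longrightarrow> x + y \<in> closure (range A)"
proof -
  assume x: "x \<in> closure (range A)" and y: "y \<in> closure (range A)"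
  have "range A \<subseteq> (\<lambda>x. x + y) -` closure (range A)"
  proof
    fix z assume "z \<in> range A"
    thus "z \<in> (\<lambda>x. x + y) -` closure (range A)" using K_add1[OF _ y] by simp
  qed
  moreover have "closed ((\<lambda>x. x + y) -` closure (range A))"
    by (intro continuous_closed_vimage closed_closure continuous_add continuous_const continuous_ident)
  ultimately have "closure (range A) \<subseteq> (\<lambda>x. x + y) -` closure (range A)"
    by (rule closure_minimal)
  thus ?thesis using x by blast
qed

lemma K_sc: "x \<in> closure (range A) \<Longrightarrow> scaleC c x \<in> closure (range A)"
proof -
  assume x: "x \<in> closure (range A)"
  have "range A \<subseteq> scaleC c -` closure (range A)"
  proof
    fix z assume "z \<in> range A"
    hence "scaleC c z \<in> range A" by (rule rA_sc)
    thus "z \<in> scaleC c -` closure (range A)" using closure_subset by fastforce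
  qed
  moreover have "closed (scaleC c -` closure (range A))"
    by (intro continuous_closed_vimage closed_closure scaleC_cont)
  ultimately have "closure (range A) \<subseteq> scaleC c -` closure (range A)"
    by (rule closure_minimal)
  thus ?thesis using x by blast
qed

lemma K_zero: "0 \<in> closure (range A)"
proof (rule closure_subset[THEN subsetD])
  show "0 \<in> range A" by (rule range_eqI[where x=0], rule bcl_zero[OF bA, symmetric])
qed

lemma K_diff: "x \<in> closure (range A) \<Longrightarrow> y \<in> closure (range A) \<Longrightarrow> x - y \<in> closure (range A)"
proof -
  assume x: "x \<in> closure (range A)" and y: "y \<in> closure (range A)"
  have "y + scaleC (-1) y = 0" using scaleC_add_left[of 1 "-1" y] by (simp add: scaleC_one)
  hence "scaleC (-1) y = - y" by (simp add: eq_neg_iff_add_eq_0 add.commute)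
  hence e: "x - y = x + scaleC (-1) y" by simp
  show ?thesis unfolding e by (rule K_add[OF x K_sc[OF y]])
qed

lemma ker_orth: "A z = 0 \<Longrightarrow> w \<in> closure (range A) \<Longrightarrow> cinner w z = 0"
proof -
  assume z: "A z = 0" and w: "w \<in> closure (range A)"
  have "range A \<subseteq> {w. cinner w z = 0}" using z by (auto simp: pos_herm[OF posA])
  moreover have "closed {w. cinner w z = 0}"
    by (intro closed_Collect_eq cinner_cont_l continuous_on_const)
  ultimately have "closure (range A) \<subseteq> {w. cinner w z = 0}" by (rule closure_minimal)
  from subsetD[OF this w] show ?thesis by simp
qed

lemma K_uniq: "m \<in> closure (range A) \<Longrightarrow> m' \<in> closure (range A) \<Longrightarrow> A m = A m' \<Longrightarrow> m = m'"
proof -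
  assume m: "m \<in> closure (range A)" and m': "m' \<in> closure (range A)" and e: "A m = A m'"
  have "A (m - m') = 0" using e bcl_diff[OF bA] by simp
  hence "cinner (m - m') (m - m') = 0" using ker_orth K_diff[OF m m'] by blast
  thus ?thesis by (metis cinner_eq_zero_iff eq_iff_diff_eq_0)
qed

lemma ex_pre:
  assumes "y \<in> range A"
  shows "\<exists>m\<in>closure (range A). A m = y"
proof -
  obtain y0 where y0: "A y0 = y" using assms by blast
  obtain m where m: "m \<in> closure (range A)" "\<And>w. w \<in> closure (range A) \<Longrightarrow> cinner (y0 - m) w = 0"
    using projection[of "closure (range A)" y0, OF closed_closure K_zero K_add K_sc] by blast
  have "cinner (A (y0 - m)) z = 0" for z
  proof -
    have "A z \<in> closure (range A)" by (rule closure_subset[THEN subsetD]) simp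
    hence "cinner (y0 - m) (A z) = 0" by (rule m(2))
    thus ?thesis by (simp add: pos_herm[OF posA])
  qed
  hence "A (y0 - m) = 0" using cinner_eq_zero_iff by blast
  hence "A m = A y0" using bcl_diff[OF bA] by simp
  thus ?thesis using m(1) y0 by blast
qed

lemma sharp_ex:
  assumes T: "T \<in> BA A"
  shows "\<exists>X. bounded_clinear X \<and> (\<forall>x. A (X x) = adj T (A x)) \<and> range X \<subseteq> closure (range A)"
proof -
  have bT: "bounded_clinear T" using T by (simp add: BA_def)
  have inr: "adj T (A x) \<in> range A" for x using T by (auto simp: BA_def)
  define X where "X x = (SOME m. m \<in> closure (range A) \<and> A m = adj T (A x))" for x
  have Xp: "X x \<in> closure (range A) \<and> A (X x) = adj T (A x)" for x
  proof -
    obtain m where "m \<in> closure (range A)" "A m = adj T (A x)" using ex_pre[OF inr[of x]] by (elim bexE)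
    hence "\<exists>m. m \<in> closure (range A) \<and> A m = adj T (A x)" by (intro exI conjI)
    thus ?thesis unfolding X_def by (rule someI_ex)
  qed
  have XK: "X x \<in> closure (range A)" for x using Xp by simp
  have XA: "A (X x) = adj T (A x)" for x using Xp by simp
  have Xadd: "X (x + y) = X x + X y" for x y
  proof (rule K_uniq)
    show "X (x + y) \<in> closure (range A)" by (rule XK)
    show "X x + X y \<in> closure (range A)" by (rule K_add[OF XK XK])
    show "A (X (x + y)) = A (X x + X y)" by (simp add: XA bcl_add[OF bA] adj_add[OF bT])
  qed
  have Xsc: "X (scaleC c x) = scaleC c (X x)" for c x
  proof (rule K_uniq)
    show "X (scaleC c x) \<in> closure (range A)" by (rule XK)
    show "scaleC c (X x) \<in> closure (range A)" by (rule K_sc[OF XK])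
    show "A (X (scaleC c x)) = A (scaleC c (X x))" by (simp add: XA bcl_sc[OF bA] adj_sc[OF bT])
  qed
  have Xsr: "X (scaleR r x) = scaleR r (X x)" for r x using Xsc by (simp add: scaleR_scaleC)
  have key: "cinner (X x) (A z) = cinner x (A (T z))" for x z
  proof -
    have "cinner (X x) (A z) = cinner (A (X x)) z" by (simp add: pos_herm[OF posA])
    also have "\<dots> = cinner (adj T (A x)) z" by (simp add: XA)
    also have "\<dots> = cinner (A x) (T z)" by (rule adj_prop2[OF bT])
    also have "\<dots> = cinner x (A (T z))" by (simp add: pos_herm[OF posA])
    finally show ?thesis .
  qed
  define F where "F = (\<lambda>z. (\<lambda>x. cinner (X x) (A z))) ` {z. norm (A z) \<le> 1}"
  have "\<exists>C. \<forall>f\<in>F. \<forall>x. norm (f x) \<le> C * norm x"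
  proof (rule ubp)
    fix f assume "f \<in> F"
    then obtain z where f: "f = (\<lambda>x. cinner (X x) (A z))" unfolding F_def by (elim imageE)
    show "bounded_linear f"
    proof (rule bounded_linear_intro[of _ "norm (A (T z))"])
      fix x y show "f (x + y) = f x + f y" by (simp add: f Xadd cinner_add_left)
    next
      fix r x show "f (scaleR r x) = scaleR r (f x)"
        by (simp add: f Xsr cinner_scaleR_left scaleR_conv_of_real)
    next
      fix x show "norm (f x) \<le> norm x * norm (A (T z))" by (simp add: f key cinner_CS)
    qed
  next
    fix x
    show "\<exists>B. \<forall>f\<in>F. norm (f x) \<le> B"
    proof (intro exI ballI)
      fix f assume "f \<in> F"
      then obtain z where f: "f = (\<lambda>x. cinner (X x) (A z))" and nz: "norm (A z) \<le> 1"
        unfolding F_def by (elim imageE) simp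
      have "norm (f x) \<le> norm (X x) * norm (A z)" by (simp add: f cinner_CS)
      also have "\<dots> \<le> norm (X x)" using nz by (simp add: mult_left_le)
      finally show "norm (f x) \<le> norm (X x)" .
    qed
  qed
  then obtain C0 where C0F: "\<And>f x. f \<in> F \<Longrightarrow> norm (f x) \<le> C0 * norm x" by blast
  have C0: "cmod (cinner (X x) (A z)) \<le> C0 * norm x" if "norm (A z) \<le> 1" for z x
  proof -
    have "(\<lambda>x. cinner (X x) (A z)) \<in> F" unfolding F_def using that by (intro imageI) simp
    from C0F[OF this, of x] show ?thesis by simp
  qed
  define C where "C = max C0 0"
  have C: "cmod (cinner (X x) (A z)) \<le> C * norm x" if "norm (A z) \<le> 1" for z x
  proof -
    have "C0 * norm x \<le> C * norm x" unfolding C_def by (intro mult_right_mono) auto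
    thus ?thesis using C0[OF that, of x] by linarith
  qed
  have C0': "C \<ge> 0" using C_def by simp
  have onR: "cmod (cinner (X x) v) \<le> C * norm x * norm v" if vr: "v \<in> range A" for x v
  proof (cases "v = 0")
    case True thus ?thesis by simp
  next
    case False
    obtain z where z: "v = A z" using vr by blast
    define c where "c = complex_of_real (1 / norm v)"
    have az: "A (scaleC c z) = scaleC c v" using z bcl_sc[OF bA] by simp
    have "norm (scaleC c v) = 1" using False by (simp add: norm_scaleC c_def norm_divide)
    hence n1: "norm (A (scaleC c z)) \<le> 1" using az by simp
    have "cmod (cinner (X x) (scaleC c v)) \<le> C * norm x" using C[OF n1, of x] az by simp
    hence "(1 / norm v) * cmod (cinner (X x) v) \<le> C * norm x" by (simp add: cip.sc_r c_def norm_mult norm_divide)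
    thus ?thesis using False by (simp add: field_simps)
  qed
  have onK: "cmod (cinner (X x) v) \<le> C * norm x * norm v" if vK: "v \<in> closure (range A)" for x v
  proof -
    have "range A \<subseteq> {v. cmod (cinner (X x) v) \<le> C * norm x * norm v}" using onR by blast
    moreover have "closed {v. cmod (cinner (X x) v) \<le> C * norm x * norm v}"
      by (intro closed_Collect_le continuous_on_norm continuous_on_mult continuous_on_const
            cinner_cont_r continuous_on_id)
    ultimately have "closure (range A) \<subseteq> {v. cmod (cinner (X x) v) \<le> C * norm x * norm v}"
      by (rule closure_minimal)
    from subsetD[OF this vK] show ?thesis by simp
  qed
  have Xb: "norm (X x) \<le> norm x * C" for x
  proof (cases "X x = 0")
    case True thus ?thesis using C0' by simp
  next
    case False
    have "(norm (X x))^2 = cmod (cinner (X x) (X x))" by (simp add: cinner_self_norm norm_power)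
    also have "\<dots> \<le> C * norm x * norm (X x)" by (rule onK[OF XK])
    finally have "norm (X x) * norm (X x) \<le> (C * norm x) * norm (X x)" by (simp add: power2_eq_square)
    hence "norm (X x) \<le> C * norm x" using False by simp
    thus ?thesis by (simp add: mult.commute)
  qed
  have "bounded_clinear X" unfolding bounded_clinear_def using Xadd Xsc Xb by blast
  moreover have "range X \<subseteq> closure (range A)" using XK by auto
  ultimately show ?thesis using XA by (intro exI[of _ X]) simp
qed

lemma sharp_props:
  assumes T: "T \<in> BA A"
  shows "bounded_clinear (sharpA A T) \<and> (\<forall>x. A (sharpA A T x) = adj T (A x))
         \<and> range (sharpA A T) \<subseteq> closure (range A)"
proof -
  let ?P = "\<lambda>X. bounded_clinear X \<and> (\<forall>x. A (X x) = adj T (A x)) \<and> range X \<subseteq> closure (range A)"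
  have "\<exists>!X. ?P X"
  proof -
    from sharp_ex[OF T] obtain X where X: "?P X" ..
    have uq: "X' = X" if "?P X'" for X'
    proof
      fix x
      have r1: "range X' \<subseteq> closure (range A)" using that by simp
      have r2: "range X \<subseteq> closure (range A)" using X by simp
      show "X' x = X x"
      proof (rule K_uniq)
        show "X' x \<in> closure (range A)" by (rule subsetD[OF r1]) simp
        show "X x \<in> closure (range A)" by (rule subsetD[OF r2]) simp
        show "A (X' x) = A (X x)" using X that by simp
      qed
    qed
    show ?thesis by (rule ex1I[where a=X]) (rule X, rule uq)
  qed
  thus ?thesis unfolding sharpA_def by (rule theI')
qed

lemma sharp_bcl: "T \<in> BA A \<Longrightarrow> bounded_clinear (sharpA A T)"
  using sharp_props by simp

lemma BA_bcl: "T \<in> BA A \<Longrightarrow> bounded_clinear T"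
  by (simp add: BA_def)

lemma sharp1:
  assumes T: "T \<in> BA A"
  shows "ipA A (T x) y = ipA A x (sharpA A T y)"
proof -
  have bT: "bounded_clinear T" using T by (simp add: BA_def)
  have "ipA A x (sharpA A T y) = cinner x (A (sharpA A T y))" by (simp add: ipA_def pos_herm[OF posA])
  also have "\<dots> = cinner x (adj T (A y))" using sharp_props[OF T] by simp
  also have "\<dots> = cinner (T x) (A y)" by (simp add: adj_prop[OF bT])
  also have "\<dots> = ipA A (T x) y" by (simp add: ipA_def pos_herm[OF posA])
  finally show ?thesis by simp
qed

lemma sharp2:
  assumes T: "T \<in> BA A"
  shows "ipA A (sharpA A T x) y = ipA A x (T y)"
proof -
  interpret a: sip "ipA A" scaleC by (rule sip_ipA[OF posA])
  have "ipA A (sharpA A T x) y = cnj (ipA A y (sharpA A T x))" by (rule a.herm)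
  also have "\<dots> = cnj (ipA A (T y) x)" by (simp add: sharp1[OF T])
  also have "\<dots> = ipA A x (T y)" by (simp add: a.cnj_B)
  finally show ?thesis .
qed

end

lemma arith_key:
  fixes c p q r n m :: real
  assumes "0 \<le> c" "c \<le> p" "c \<le> q" "0 \<le> q" "p \<le> n" "q^2 + r \<le> m" "0 \<le> r"
  shows "c + sqrt (p^2 + r) \<le> n + sqrt m"
proof (cases "p \<le> q")
  case True
  have "p^2 \<le> q^2" using True assms by (simp add: power_mono)
  hence "sqrt (p^2 + r) \<le> sqrt m" using assms by (intro real_sqrt_le_mono) linarith
  thus ?thesis using assms True by linarith
next
  case False
  have m0: "0 \<le> m" using assms by (smt (verit) zero_le_power2)
  have qm: "q \<le> sqrt m" using assms by (intro real_le_rsqrt) linarith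
  have "p^2 + r \<le> (p - q + sqrt m)^2"
  proof -
    have "(p - q + sqrt m)^2 = (p - q)^2 + 2 * (p - q) * sqrt m + m"
      using m0 by (simp add: power2_eq_square algebra_simps)
    moreover have "2 * (p - q) * q \<le> 2 * (p - q) * sqrt m" using False qm by (intro mult_left_mono) auto
    ultimately show ?thesis using assms by (simp add: power2_eq_square algebra_simps)
  qed
  moreover have "0 \<le> p - q + sqrt m" using False m0 by simp
  ultimately have "sqrt (p^2 + r) \<le> p - q + sqrt m" by (intro real_le_lsqrt)
  thus ?thesis using assms by linarith
qed

context
  fixes A :: "'a::chilbert_space \<Rightarrow> 'a"
  assumes posA: "positive_op A"
begin

interpretation a: sip "ipA A" scaleC by (rule sip_ipA[OF posA])

lemma nA: "normA A x = a.nB x" by (simp add: normA_def a.nB_def)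

lemma normA_bound: "\<exists>KA\<ge>0. \<forall>y. normA A y \<le> KA * norm y"
proof -
  obtain K where K: "K \<ge> 0" "\<And>x. norm (A x) \<le> K * norm x" using bcl_bound[OF bA[OF posA]] by blast
  have "normA A y \<le> sqrt K * norm y" for y
  proof -
    have "Re (ipA A y y) \<le> cmod (ipA A y y)" by (rule complex_Re_le_cmod)
    also have "\<dots> \<le> norm (A y) * norm y" unfolding ipA_def by (rule cinner_CS)
    also have "\<dots> \<le> K * norm y * norm y" using K by (simp add: mult_right_mono)
    moreover have "(sqrt K * norm y)^2 = K * norm y * norm y"
      using K by (simp add: power_mult_distrib power2_eq_square[of "norm y"])
    ultimately have "Re (ipA A y y) \<le> (sqrt K * norm y)^2" by simp
    thus ?thesis unfolding normA_def using K by (intro real_le_lsqrt) auto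
  qed
  thus ?thesis using K by (intro exI[of _ "sqrt K"]) auto
qed

lemma iter:
  fixes B :: "'a \<Rightarrow> 'a"
  assumes sa: "\<And>x y. ipA A (B x) y = ipA A x (B y)"
    and bB: "\<And>x. norm (B x) \<le> KB * norm x" and KB: "KB \<ge> 0"
  shows "normA A (B x) \<le> KB * normA A x"
proof -
  obtain KA where KA: "KA \<ge> 0" "\<And>y. normA A y \<le> KA * norm y" using normA_bound by blast
  have pw_sa: "ipA A ((B^^m) u) y = ipA A u ((B^^m) y)" for m u y
  proof (induction m arbitrary: u)
    case 0 show ?case by simp
  next
    case (Suc m)
    have "ipA A ((B^^Suc m) u) y = ipA A ((B^^m) (B u)) y" by (simp only: funpow_Suc_right comp_apply)
    also have "\<dots> = ipA A (B u) ((B^^m) y)" by (rule Suc.IH)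
    also have "\<dots> = ipA A u (B ((B^^m) y))" by (rule sa)
    also have "\<dots> = ipA A u ((B^^Suc m) y)" by simp
    finally show ?case .
  qed
  have pw_b: "norm ((B^^m) x) \<le> KB^m * norm x" for m
  proof (induction m)
    case 0 show ?case by simp
  next
    case (Suc m)
    have "norm ((B^^Suc m) x) \<le> KB * norm ((B^^m) x)" using bB by simp
    also have "\<dots> \<le> KB * (KB^m * norm x)" using Suc.IH KB by (rule mult_left_mono)
    finally show ?case by simp
  qed
  define c where "c = normA A x"
  define k where "k n = normA A ((B^^(2^n)) x)" for n :: nat
  have c0: "c \<ge> 0" by (simp add: c_def nA a.nB_ge0)
  have k0: "k n \<ge> 0" for n by (simp add: k_def nA a.nB_ge0)
  have sq: "(normA A ((B^^m) x))^2 \<le> normA A ((B^^(2*m)) x) * c" for m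
  proof -
    have "(normA A ((B^^m) x))^2 = Re (ipA A ((B^^m) x) ((B^^m) x))" by (simp add: nA a.nB_sq)
    also have "ipA A ((B^^m) x) ((B^^m) x) = ipA A x ((B^^m) ((B^^m) x))" by (rule pw_sa)
    also have "(B^^m) ((B^^m) x) = (B^^(2*m)) x" by (simp add: mult_2 funpow_add)
    also have "Re (ipA A x ((B^^(2*m)) x)) \<le> cmod (ipA A x ((B^^(2*m)) x))" by (rule complex_Re_le_cmod)
    also have "\<dots> \<le> a.nB x * a.nB ((B^^(2*m)) x)" by (rule a.CS)
    finally show ?thesis by (simp add: c_def nA mult.commute)
  qed
  have kstep: "(k n)^2 \<le> k (Suc n) * c" for n
    using sq[of "2^n"] by (simp add: k_def)
  have kb: "k n \<le> KA * (KB^(2^n) * norm x)" for n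
  proof -
    have "k n \<le> KA * norm ((B^^(2^n)) x)" using KA by (simp add: k_def)
    also have "\<dots> \<le> KA * (KB^(2^n) * norm x)" using pw_b[of "2^n"] KA(1) by (rule mult_left_mono)
    finally show ?thesis .
  qed
  have kB: "k 0 = normA A (B x)" by (simp add: k_def)
  show ?thesis
  proof (cases "c = 0 \<or> KB = 0")
    case True
    show ?thesis
    proof (cases "c = 0")
      case True
      have "(k 0)^2 \<le> 0" using kstep[of 0] True by simp
      hence "k 0 = 0" by simp
      thus ?thesis using kB True c_def by simp
    next
      case False
      hence "KB = 0" using \<open>c = 0 \<or> KB = 0\<close> by simp
      hence "B x = 0" using bB[of x] by simp
      hence "normA A (B x) = 0" by (simp add: nA a.nB_def)
      thus ?thesis using \<open>KB = 0\<close> by simp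
    qed
  next
    case False
    hence cp: "c > 0" and KBp: "KB > 0" using c0 KB by auto
    show ?thesis
    proof (rule ccontr)
      assume "\<not> ?thesis"
      hence big: "k 0 > KB * c" using kB c_def by simp
      define r where "r = k 0 / (KB * c)"
      have r1: "r > 1" using big cp KBp by (simp add: r_def field_simps)
      have low: "r^(2^n) * KB^(2^n) * c \<le> k n" for n
      proof (induction n)
        case 0 show ?case using cp KBp by (simp add: r_def)
      next
        case (Suc n)
        have L0: "0 \<le> r^(2^n) * KB^(2^n) * c" using r1 KBp cp by simp
        have "(r^(2^n) * KB^(2^n) * c)^2 \<le> (k n)^2" using Suc.IH L0 by (rule power_mono)
        also have "\<dots> \<le> k (Suc n) * c" by (rule kstep)
        finally have f1: "(r^(2^n) * KB^(2^n) * c)^2 \<le> k (Suc n) * c" .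
        have pw: "z^(2^Suc n) = (z^(2^n))^2" for z :: real
          by (simp add: power_mult[symmetric] mult.commute)
        have f2: "(r^(2^n) * KB^(2^n) * c)^2 = (r^(2^Suc n) * KB^(2^Suc n) * c) * c"
          unfolding pw by (simp add: power2_eq_square ac_simps)
        have "(r^(2^Suc n) * KB^(2^Suc n) * c) * c \<le> k (Suc n) * c" using f1 unfolding f2 .
        thus ?case using cp by simp
      qed
      define L where "L = KA * norm x / c"
      have rb: "r^(2^n) \<le> L" for n
      proof -
        have "r^(2^n) * KB^(2^n) * c \<le> KA * (KB^(2^n) * norm x)" using low[of n] kb[of n] by linarith
        hence "r^(2^n) * (KB^(2^n) * c) \<le> (KA * norm x / c) * (KB^(2^n) * c)"
          using cp by (simp add: field_simps)
        moreover have "KB^(2^n) * c > 0" using KBp cp by simp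
        ultimately show ?thesis unfolding L_def by (rule mult_right_le_imp_le)
      qed
      obtain n :: nat where n: "L / (r - 1) < real n" using reals_Archimedean2 by blast
      have "1 + real n * (r - 1) \<le> (1 + (r - 1))^n" using r1 by (intro Bernoulli_inequality) simp
      also have "\<dots> = r^n" by simp
      also have "r^n \<le> r^(2^n)" using r1 by (intro power_increasing) (auto intro: less_imp_le less_exp)
      also have "\<dots> \<le> L" by (rule rb)
      finally have "real n * (r - 1) < L" by simp
      moreover have "L < real n * (r - 1)" using n r1 by (simp add: field_simps)
      ultimately show False by simp
    qed
  qed
qed

lemma BA_Abdd:
  assumes T: "T \<in> BA A"
  shows "\<exists>C\<ge>0. \<forall>x. normA A (T x) \<le> C * normA A x"
proof -
  define Ts where "Ts = sharpA A T"
  define B where "B x = Ts (T x)" for x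
  have bT: "bounded_clinear T" using T by (rule BA_bcl[OF posA])
  have bTs: "bounded_clinear Ts" unfolding Ts_def using T by (rule sharp_bcl[OF posA])
  obtain K1 where K1: "K1 \<ge> 0" "\<And>x. norm (T x) \<le> K1 * norm x" using bcl_bound[OF bT] by blast
  obtain K2 where K2: "K2 \<ge> 0" "\<And>x. norm (Ts x) \<le> K2 * norm x" using bcl_bound[OF bTs] by blast
  have sa: "ipA A (B x) y = ipA A x (B y)" for x y
  proof -
    have "ipA A (B x) y = ipA A (T x) (T y)" unfolding B_def Ts_def by (rule sharp2[OF posA T])
    also have "\<dots> = ipA A x (B y)" unfolding B_def Ts_def by (rule sharp1[OF posA T])
    finally show ?thesis .
  qed
  have bB: "norm (B x) \<le> (K2 * K1) * norm x" for x
  proof -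
    have "norm (B x) \<le> K2 * norm (T x)" using K2 by (simp add: B_def)
    also have "\<dots> \<le> K2 * (K1 * norm x)" using K1 K2 by (simp add: mult_left_mono)
    finally show ?thesis by (simp add: ac_simps)
  qed
  have it: "normA A (B x) \<le> (K2 * K1) * normA A x" for x
    by (rule iter[OF sa bB]) (use K1 K2 in simp)
  have "normA A (T x) \<le> sqrt (K2 * K1) * normA A x" for x
  proof -
    have "(normA A (T x))^2 = Re (ipA A (T x) (T x))" by (simp add: nA a.nB_sq)
    also have "ipA A (T x) (T x) = ipA A x (B x)" unfolding B_def Ts_def by (rule sharp1[OF posA T])
    also have "Re (ipA A x (B x)) \<le> cmod (ipA A x (B x))" by (rule complex_Re_le_cmod)
    also have "\<dots> \<le> normA A x * normA A (B x)" by (simp add: nA a.CS)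
    also have "\<dots> \<le> normA A x * ((K2 * K1) * normA A x)"
      by (intro mult_left_mono it) (simp add: nA a.nB_ge0)
    finally have f: "(normA A (T x))^2 \<le> normA A x * ((K2 * K1) * normA A x)" .
    have e: "(sqrt (K2 * K1) * normA A x)^2 = normA A x * ((K2 * K1) * normA A x)"
      using K1 K2 by (simp add: power_mult_distrib power2_eq_square[of "normA A x"] mult.assoc mult.left_commute)
    have nn: "0 \<le> sqrt (K2 * K1) * normA A x" using K1 K2 by (simp add: nA a.nB_ge0)
    show ?thesis using f unfolding e[symmetric] using nn by (rule power2_le_imp_le)
  qed
  thus ?thesis using K1(1) K2(1) by (intro exI[of _ "sqrt (K2 * K1)"]) auto
qed

lemma sharp_Abdd:
  assumes T: "T \<in> BA A"
  shows "\<exists>C\<ge>0. \<forall>x. normA A (sharpA A T x) \<le> C * normA A x"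
proof -
  obtain C where C: "C \<ge> 0" "\<And>x. normA A (T x) \<le> C * normA A x" using BA_Abdd[OF T] by blast
  have "normA A (sharpA A T x) \<le> C * normA A x" for x
  proof -
    define y where "y = sharpA A T x"
    have "(normA A y)^2 = Re (ipA A y y)" by (simp add: nA a.nB_sq)
    also have "ipA A y y = ipA A x (T y)" unfolding y_def by (rule sharp2[OF posA T])
    also have "Re (ipA A x (T y)) \<le> cmod (ipA A x (T y))" by (rule complex_Re_le_cmod)
    also have "\<dots> \<le> normA A x * normA A (T y)" by (simp add: nA a.CS)
    also have "\<dots> \<le> normA A x * (C * normA A y)" by (intro mult_left_mono C(2)) (simp add: nA a.nB_ge0)
    finally have h: "normA A y * normA A y \<le> (C * normA A x) * normA A y" by (simp add: power2_eq_square ac_simps)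
    show ?thesis
    proof (cases "normA A y = 0")
      case True thus ?thesis using C by (simp add: y_def nA a.nB_ge0)
    next
      case False
      hence "normA A y > 0" by (simp add: nA a.nB_ge0 less_le)
      thus ?thesis using h by (simp add: y_def)
    qed
  qed
  thus ?thesis using C by blast
qed

lemma unit_ex:
  assumes "A \<noteq> (\<lambda>x. 0)"
  shows "\<exists>u. normA A u = 1"
proof -
  obtain x where x: "A x \<noteq> 0" using assms by auto
  have "normA A x \<noteq> 0"
  proof
    assume n0: "normA A x = 0"
    have "cmod (ipA A x y) \<le> 0" for y using a.CS[of x y] n0 by (simp add: nA)
    hence "cinner (A x) (A x) = 0" by (simp add: ipA_def)
    thus False using x cinner_eq_zero_iff by blast
  qed
  hence np: "normA A x > 0" by (simp add: nA a.nB_ge0 less_le)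
  define u where "u = scaleC (complex_of_real (1 / normA A x)) x"
  have "normA A u = 1" using np by (simp add: u_def nA a.nB_sc norm_divide)
  thus ?thesis by blast
qed

lemma opn_upper:
  assumes bd: "\<And>x. normA A (T x) \<le> C * normA A x" and u: "normA A u = 1"
  shows "normA A (T u) \<le> opnormA A T"
  unfolding opnormA_def
proof (rule cSup_upper)
  show "normA A (T u) \<in> {normA A (T x) |x. normA A x = 1}" using u by blast
  show "bdd_above {normA A (T x) |x. normA A x = 1}"
  proof (rule bdd_aboveI[of _ C])
    fix t assume "t \<in> {normA A (T x) |x. normA A x = 1}"
    then obtain x where "t = normA A (T x)" "normA A x = 1" by blast
    thus "t \<le> C" using bd[of x] by simp
  qed
qed

lemma omega_upper:
  assumes S: "S \<in> BA A"
  shows "cmod (ipA A (S v) v) \<le> omegaA A S * (normA A v)^2"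
proof -
  obtain C where C: "C \<ge> 0" "\<And>x. normA A (S x) \<le> C * normA A x" using BA_Abdd[OF S] by blast
  have bS: "bounded_clinear S" using S by (rule BA_bcl[OF posA])
  have bdd: "bdd_above {cmod (ipA A (S x) x) |x. normA A x = 1}"
  proof (rule bdd_aboveI[of _ C])
    fix t assume "t \<in> {cmod (ipA A (S x) x) |x. normA A x = 1}"
    then obtain x where t: "t = cmod (ipA A (S x) x)" and x: "normA A x = 1" by blast
    have "t \<le> normA A (S x) * normA A x" using t by (simp add: nA a.CS)
    also have "\<dots> \<le> C" using C(2)[of x] x by simp
    finally show "t \<le> C" .
  qed
  show ?thesis
  proof (cases "normA A v = 0")
    case True
    have "cmod (ipA A (S v) v) \<le> normA A (S v) * normA A v" by (simp add: nA a.CS)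
    thus ?thesis using True by simp
  next
    case False
    hence np: "normA A v > 0" by (simp add: nA a.nB_ge0 less_le)
    define n where "n = normA A v"
    define u where "u = scaleC (complex_of_real (1 / n)) v"
    have u1: "normA A u = 1" using np by (simp add: u_def n_def nA a.nB_sc norm_divide)
    have "ipA A (S u) u = complex_of_real (1 / n) * cnj (complex_of_real (1 / n)) * ipA A (S v) v"
      by (simp add: u_def bcl_sc[OF bS] a.sc_l a.sc_r)
    hence e: "cmod (ipA A (S u) u) = cmod (ipA A (S v) v) / n^2"
      using np by (simp add: norm_mult norm_divide n_def power2_eq_square)
    have "cmod (ipA A (S u) u) \<le> omegaA A S"
      unfolding omegaA_def by (rule cSup_upper[OF _ bdd]) (use u1 in blast)
    hence "cmod (ipA A (S v) v) / n^2 \<le> omegaA A S" using e by simp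
    thus ?thesis using np by (simp add: n_def field_simps)
  qed
qed

end

context
  fixes A :: "'a::chilbert_space \<Rightarrow> 'a"
  assumes posA: "positive_op A"
begin

interpretation a: sip "ipA A" scaleC by (rule sip_ipA[OF posA])

lemma sip_ipAA: "sip (ipAA A) (\<lambda>c w. (scaleC c (fst w), scaleC c (snd w)))"
proof
  fix x y z :: "'a \<times> 'a" and c
  show "ipAA A (x + y) z = ipAA A x z + ipAA A y z" by (simp add: ipAA_def a.add_l)
  show "ipAA A (scaleC c (fst x), scaleC c (snd x)) y = c * ipAA A x y"
    by (simp add: ipAA_def a.sc_l algebra_simps)
  show "ipAA A x y = cnj (ipAA A y x)" by (simp add: ipAA_def a.cnj_B)
  show "0 \<le> Re (ipAA A x x)" using a.pos[of "fst x"] a.pos[of "snd x"] by (simp add: ipAA_def)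
qed

interpretation aa: sip "ipAA A" "\<lambda>c w. (scaleC c (fst w), scaleC c (snd w))" by (rule sip_ipAA)

lemma comb_bd:
  assumes F: "\<And>x. normA A (F x) \<le> c1 * normA A x" and G: "\<And>x. normA A (G x) \<le> c2 * normA A x"
    and H: "\<And>x. normA A (H x) \<le> c3 * normA A x" and J: "\<And>x. normA A (J x) \<le> c4 * normA A x"
    and c1: "c1 \<ge> 0" and c3: "c3 \<ge> 0"
  shows "normA A (scaleC (complex_of_real t) (F (G x)) + H (J x)) \<le> (\<bar>t\<bar> * (c1 * c2) + c3 * c4) * normA A x"
proof -
  have 1: "normA A (scaleC (complex_of_real t) (F (G x)) + H (J x))
        \<le> normA A (scaleC (complex_of_real t) (F (G x))) + normA A (H (J x))"
    unfolding nA[OF posA] by (rule a.nB_add)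
  have 2: "normA A (scaleC (complex_of_real t) (F (G x))) = \<bar>t\<bar> * normA A (F (G x))"
    by (simp add: nA[OF posA] a.nB_sc)
  have 3: "normA A (F (G x)) \<le> c1 * (c2 * normA A x)" using F[of "G x"] G[of x] c1
    by (meson mult_left_mono order_trans)
  have 4: "normA A (H (J x)) \<le> c3 * (c4 * normA A x)" using H[of "J x"] J[of x] c3
    by (meson mult_left_mono order_trans)
  have 5: "\<bar>t\<bar> * normA A (F (G x)) \<le> \<bar>t\<bar> * (c1 * (c2 * normA A x))"
    using 3 by (rule mult_left_mono) simp
  have "normA A (scaleC (complex_of_real t) (F (G x)) + H (J x)) \<le> \<bar>t\<bar> * (c1 * (c2 * normA A x)) + c3 * (c4 * normA A x)"
    using 1 2 4 5 by linarith
  also have "\<dots> = (\<bar>t\<bar> * (c1 * c2) + c3 * c4) * normA A x" by (simp add: algebra_simps)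
  finally show ?thesis .
qed

lemma normAA_unit: "normA A u = 1 \<Longrightarrow> normAA A (u, 0) = 1"
  by (simp add: normAA_def ipAA_def normA_def)

lemma main_pt:
  fixes P Q R S :: "'a \<Rightarrow> 'a" and l :: real and w :: "'a \<times> 'a"
  assumes P: "P \<in> BA A" and Q: "Q \<in> BA A" and R: "R \<in> BA A" and S: "S \<in> BA A"
    and l0: "0 \<le> l" and l1: "l \<le> 1" and hne: "\<exists>u. normA A u = 1" and w: "normAA A w = 1"
  shows "cmod (ipAA A (block P Q R S w) w) \<le> (1/2) * (opnormA A P + 2 * omegaA A S
      + sqrt (opnormA A (\<lambda>x. scaleC (complex_of_real (l^2)) (P (sharpA A P x)) + Q (sharpA A Q x)))
      + sqrt (opnormA A (\<lambda>x. scaleC (complex_of_real ((1 - l)^2)) (P (sharpA A P x)) + sharpA A R (R x))))"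
proof -
  define Ps where "Ps = sharpA A P"
  define Qs where "Qs = sharpA A Q"
  define Rs where "Rs = sharpA A R"
  define M1 where "M1 = (\<lambda>x. scaleC (complex_of_real (l^2)) (P (Ps x)) + Q (Qs x))"
  define M2 where "M2 = (\<lambda>x. scaleC (complex_of_real ((1 - l)^2)) (P (Ps x)) + Rs (R x))"
  define N where "N = opnormA A P"
  define W where "W = omegaA A S"
  define m1 where "m1 = opnormA A M1"
  define m2 where "m2 = opnormA A M2"
  have bP: "bounded_clinear P" using P by (rule BA_bcl[OF posA])
  have bR: "bounded_clinear R" using R by (rule BA_bcl[OF posA])
  obtain CP where CP: "CP \<ge> 0" "\<And>x. normA A (P x) \<le> CP * normA A x" using BA_Abdd[OF posA P] by blast
  obtain CQ where CQ: "CQ \<ge> 0" "\<And>x. normA A (Q x) \<le> CQ * normA A x" using BA_Abdd[OF posA Q] by blast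
  obtain CR where CR: "CR \<ge> 0" "\<And>x. normA A (R x) \<le> CR * normA A x" using BA_Abdd[OF posA R] by blast
  obtain CPs where CPs: "CPs \<ge> 0" "\<And>x. normA A (Ps x) \<le> CPs * normA A x"
    using sharp_Abdd[OF posA P] unfolding Ps_def by blast
  obtain CQs where CQs: "CQs \<ge> 0" "\<And>x. normA A (Qs x) \<le> CQs * normA A x"
    using sharp_Abdd[OF posA Q] unfolding Qs_def by blast
  obtain CRs where CRs: "CRs \<ge> 0" "\<And>x. normA A (Rs x) \<le> CRs * normA A x"
    using sharp_Abdd[OF posA R] unfolding Rs_def by blast
  have bM1: "normA A (M1 x) \<le> (\<bar>l^2\<bar> * (CP * CPs) + CQ * CQs) * normA A x" for x
    unfolding M1_def by (rule comb_bd[OF CP(2) CPs(2) CQ(2) CQs(2) CP(1) CQ(1)])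
  have bM2: "normA A (M2 x) \<le> (\<bar>(1 - l)^2\<bar> * (CP * CPs) + CRs * CR) * normA A x" for x
    unfolding M2_def by (rule comb_bd[OF CP(2) CPs(2) CRs(2) CR(2) CP(1) CRs(1)])
  have hN: "normA A (P u) \<le> N" if "normA A u = 1" for u
    unfolding N_def by (rule opn_upper[OF posA CP(2) that])
  have hm1: "Re (ipA A (M1 u) u) \<le> m1" if u: "normA A u = 1" for u
  proof -
    have "Re (ipA A (M1 u) u) \<le> cmod (ipA A (M1 u) u)" by (rule complex_Re_le_cmod)
    also have "\<dots> \<le> normA A (M1 u) * normA A u" by (simp add: nA[OF posA] a.CS)
    also have "\<dots> \<le> m1" unfolding m1_def u by (simp add: opn_upper[OF posA bM1 u])
    finally show ?thesis .
  qed
  have hm2: "Re (ipA A (M2 u) u) \<le> m2" if u: "normA A u = 1" for u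
  proof -
    have "Re (ipA A (M2 u) u) \<le> cmod (ipA A (M2 u) u)" by (rule complex_Re_le_cmod)
    also have "\<dots> \<le> normA A (M2 u) * normA A u" by (simp add: nA[OF posA] a.CS)
    also have "\<dots> \<le> m2" unfolding m2_def u by (simp add: opn_upper[OF posA bM2 u])
    finally show ?thesis .
  qed
  have hW: "cmod (ipA A (S v) v) \<le> W * (normA A v)^2" for v
    unfolding W_def by (rule omega_upper[OF posA S])
  obtain u0 where u0: "normA A u0 = 1" using hne by blast
  have nn: "0 \<le> normA A v" for v by (simp add: nA[OF posA] a.nB_ge0)
  have N0: "0 \<le> N" using hN[OF u0] nn[of "P u0"] by linarith
  have m10: "0 \<le> m1" using opn_upper[OF posA bM1 u0] nn[of "M1 u0"] unfolding m1_def by linarith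
  have m20: "0 \<le> m2" using opn_upper[OF posA bM2 u0] nn[of "M2 u0"] unfolding m2_def by linarith
  have W0': "cmod (ipA A (S u0) u0) \<le> W" using hW[of u0] u0 by simp
  have W0: "0 \<le> W" using W0' norm_ge_zero[of "ipA A (S u0) u0"] by linarith
  define x1 where "x1 = fst w"
  define x2 where "x2 = snd w"
  define a where "a = normA A x1"
  define b where "b = normA A x2"
  have a0: "a \<ge> 0" by (simp add: a_def nA[OF posA] a.nB_ge0)
  have ab: "a^2 + b^2 = 1"
  proof -
    have "sqrt (Re (ipAA A w w)) = 1" using w by (simp add: normAA_def)
    hence "Re (ipAA A w w) = 1" by simp
    thus ?thesis by (simp add: ipAA_def a_def b_def x1_def x2_def nA[OF posA] a.nB_sq)
  qed
  define T1 where "T1 = complex_of_real l * ipA A (P x1) x1 + ipA A (Q x2) x1"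
  define T2 where "T2 = complex_of_real (1 - l) * ipA A (P x1) x1 + ipA A (R x1) x2"
  define T3 where "T3 = ipA A (S x2) x2"
  have dec: "ipAA A (block P Q R S w) w = T1 + T2 + T3"
    by (simp add: block_def ipAA_def T1_def T2_def T3_def x1_def x2_def a.add_l algebra_simps)
  have hT3: "cmod T3 \<le> W"
  proof -
    have "cmod T3 \<le> W * b^2" using hW[of x2] by (simp add: T3_def b_def)
    also have "\<dots> \<le> W * 1" using ab W0 a0 by (intro mult_left_mono) (auto simp: add_nonneg_eq_0_iff, smt (verit) zero_le_power2)
    finally show ?thesis by simp
  qed
  have sm1: "0 \<le> sqrt m1" using m10 by simp
  have sm2: "0 \<le> sqrt m2" using m20 by simp
  have hT12: "cmod T1 \<le> (l * N + sqrt m1) / 2 \<and> cmod T2 \<le> ((1 - l) * N + sqrt m2) / 2"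
  proof (cases "a = 0")
    case True
    have z: "ipA A y x1 = 0" for y
    proof -
      have "cmod (ipA A y x1) \<le> normA A y * normA A x1" by (simp add: nA[OF posA] a.CS)
      thus ?thesis using True a_def by simp
    qed
    have "ipA A (R x1) x2 = ipA A x1 (Rs x2)" unfolding Rs_def by (rule sharp1[OF posA R])
    also have "\<dots> = 0"
    proof -
      have "cmod (ipA A x1 (Rs x2)) \<le> normA A x1 * normA A (Rs x2)" by (simp add: nA[OF posA] a.CS)
      thus ?thesis using True a_def by simp
    qed
    finally have z2: "ipA A (R x1) x2 = 0" .
    have "T1 = 0" "T2 = 0" by (simp_all add: T1_def T2_def z z2)
    thus ?thesis using l0 l1 N0 sm1 sm2 by simp
  next
    case False
    hence ap: "a > 0" using a0 by simp
    define u1 where "u1 = scaleC (complex_of_real (1 / a)) x1"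
    have anb: "a.nB x1 = a" by (simp add: a_def nA[OF posA])
    have hu1: "normA A u1 = 1" using ap by (simp add: u1_def nA[OF posA] a.nB_sc norm_divide anb)
    have "complex_of_real a * complex_of_real (1 / a) = 1" using ap by (simp add: of_real_mult[symmetric])
    hence hx1: "x1 = scaleC (complex_of_real a) u1" by (simp add: u1_def scaleC_scaleC scaleC_one)
    have huu: "ipA A u1 u1 = 1" using a.nB_sq'[of u1] hu1 by (simp add: nA[OF posA])
    have hy: "ipA A y x1 = complex_of_real a * ipA A y u1" for y
      by (subst hx1) (simp add: a.sc_r)
    have hy2: "ipA A x1 y = complex_of_real a * ipA A u1 y" for y
      by (subst hx1) (simp add: a.sc_l)
    have hP1: "P x1 = scaleC (complex_of_real a) (P u1)" by (subst hx1) (simp add: bcl_sc[OF bP])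
    have hR1: "R x1 = scaleC (complex_of_real a) (R u1)" by (subst hx1) (simp add: bcl_sc[OF bR])
    have hw: "aa.nB w = 1" using w by (simp add: aa.nB_def normAA_def)
    define e where "e = (u1, 0::'a)"
    have he: "aa.nB e = 1" using hu1 by (simp add: aa.nB_def e_def ipAA_def normA_def)
    have ew: "ipAA A e w = complex_of_real a"
      by (simp add: e_def ipAA_def x1_def[symmetric] hy huu)
    have we: "ipAA A w e = complex_of_real a"
      by (simp add: e_def ipAA_def x1_def[symmetric] hy2 huu)
    define g where "g = (scaleC (complex_of_real l) (Ps u1), Qs u1)"
    have wg: "ipAA A w g = complex_of_real l * ipA A (P x1) u1 + ipA A (Q x2) u1"
      by (simp add: g_def ipAA_def x1_def[symmetric] x2_def[symmetric] a.sc_r Ps_def Qs_def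
            sharp1[OF posA P] sharp1[OF posA Q])
    have T1f: "T1 = ipAA A e w * ipAA A w g"
      unfolding ew wg T1_def by (simp add: hy algebra_simps)
    have eg: "ipAA A e g = complex_of_real l * ipA A (P u1) u1"
      by (simp add: e_def g_def ipAA_def a.sc_r Ps_def sharp1[OF posA P])
    have ceg: "cmod (ipAA A e g) \<le> l * N"
    proof -
      have "cmod (ipA A (P u1) u1) \<le> normA A (P u1) * normA A u1" by (simp add: nA[OF posA] a.CS)
      also have "\<dots> \<le> N" using hN[OF hu1] hu1 by simp
      finally show ?thesis using l0 by (simp add: eg norm_mult mult_left_mono)
    qed
    have gg: "ipAA A g g = ipA A (M1 u1) u1"
    proof -
      have "ipAA A g g = complex_of_real ((cmod (complex_of_real l))^2) * ipA A (Ps u1) (Ps u1)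
                         + ipA A (Qs u1) (Qs u1)"
        by (simp add: g_def ipAA_def a.B_sc_sc)
      also have "ipA A (Ps u1) (Ps u1) = ipA A (P (Ps u1)) u1" unfolding Ps_def by (rule sharp1[OF posA P, symmetric])
      also have "ipA A (Qs u1) (Qs u1) = ipA A (Q (Qs u1)) u1" unfolding Qs_def by (rule sharp1[OF posA Q, symmetric])
      also have "complex_of_real ((cmod (complex_of_real l))^2) = complex_of_real (l^2)" by simp
      finally show ?thesis by (simp add: M1_def a.add_l a.sc_l)
    qed
    have ng: "aa.nB g \<le> sqrt m1"
      unfolding aa.nB_def gg using hm1[OF hu1] by (rule real_sqrt_le_mono)
    have "cmod T1 \<le> (aa.nB e * aa.nB g + cmod (ipAA A e g)) / 2"
      unfolding T1f by (rule aa.buzano[OF hw])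
    also have "\<dots> \<le> (sqrt m1 + l * N) / 2" using he ng ceg by simp
    finally have t1: "cmod T1 \<le> (l * N + sqrt m1) / 2" by simp
    define h where "h = (scaleC (complex_of_real (1 - l)) (P u1), R u1)"
    have hw2: "ipAA A h w = complex_of_real (1 - l) * ipA A (P u1) x1 + ipA A (R u1) x2"
      by (simp add: h_def ipAA_def x1_def[symmetric] x2_def[symmetric] a.sc_l)
    have T2f: "T2 = ipAA A h w * ipAA A w e"
      unfolding we hw2 T2_def hP1 hR1 by (simp add: a.sc_l algebra_simps)
    define c' where "c' = (1 - l) * cmod (ipA A (P u1) u1)"
    define p where "p = (1 - l) * normA A (P u1)"
    define q where "q = (1 - l) * normA A (Ps u1)"
    define r where "r = (normA A (R u1))^2"
    have cl: "cmod (1 - complex_of_real l) = 1 - l"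
      using l1 by (metis abs_of_nonneg diff_ge_0_iff_ge norm_of_real of_real_1 of_real_diff)
    have he2: "cmod (ipAA A h e) = c'"
      using l1 by (simp add: h_def e_def ipAA_def a.sc_l c'_def norm_mult cl)
    have hh: "Re (ipAA A h h) = p^2 + r"
      using l1 by (simp add: h_def ipAA_def a.B_sc_sc p_def r_def nA[OF posA] a.nB_sq power_mult_distrib cl)
    have nh: "aa.nB h = sqrt (p^2 + r)" by (simp add: aa.nB_def hh)
    have k1: "0 \<le> c'" using l1 by (simp add: c'_def)
    have k2: "c' \<le> p"
    proof -
      have "cmod (ipA A (P u1) u1) \<le> normA A (P u1) * normA A u1" by (simp add: nA[OF posA] a.CS)
      thus ?thesis using l1 hu1 by (simp add: c'_def p_def mult_left_mono)
    qed
    have k3: "c' \<le> q"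
    proof -
      have "ipA A (P u1) u1 = ipA A u1 (Ps u1)" unfolding Ps_def by (rule sharp1[OF posA P])
      moreover have "cmod (ipA A u1 (Ps u1)) \<le> normA A u1 * normA A (Ps u1)" by (simp add: nA[OF posA] a.CS)
      ultimately show ?thesis using l1 hu1 by (simp add: c'_def q_def mult_left_mono)
    qed
    have k4: "0 \<le> q" using l1 by (simp add: q_def nA[OF posA] a.nB_ge0)
    have k5: "p \<le> (1 - l) * N" using l1 hN[OF hu1] by (simp add: p_def mult_left_mono)
    have k6: "q^2 + r \<le> m2"
    proof -
      have "ipA A (M2 u1) u1 = complex_of_real ((1 - l)^2) * ipA A (P (Ps u1)) u1 + ipA A (Rs (R u1)) u1"
        by (simp add: M2_def a.add_l a.sc_l)
      also have "ipA A (P (Ps u1)) u1 = ipA A (Ps u1) (Ps u1)" unfolding Ps_def by (rule sharp1[OF posA P])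
      also have "ipA A (Rs (R u1)) u1 = ipA A (R u1) (R u1)" unfolding Rs_def by (rule sharp2[OF posA R])
      finally have "Re (ipA A (M2 u1) u1) = q^2 + r"
        by (simp add: q_def r_def nA[OF posA] a.nB_sq power_mult_distrib)
      thus ?thesis using hm2[OF hu1] by simp
    qed
    have k7: "0 \<le> r" by (simp add: r_def)
    have key: "c' + sqrt (p^2 + r) \<le> (1 - l) * N + sqrt m2"
      by (rule arith_key[OF k1 k2 k3 k4 k5 k6 k7])
    have "cmod T2 \<le> (aa.nB h * aa.nB e + cmod (ipAA A h e)) / 2"
      unfolding T2f by (rule aa.buzano[OF hw])
    also have "\<dots> = (sqrt (p^2 + r) + c') / 2" using he by (simp add: nh he2)
    also have "\<dots> \<le> ((1 - l) * N + sqrt m2) / 2" using key by simp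
    finally show ?thesis using t1 by simp
  qed
  have "cmod (ipAA A (block P Q R S w) w) \<le> cmod T1 + cmod T2 + cmod T3"
    unfolding dec by (meson norm_triangle_ineq order_trans add_mono order_refl)
  also have "\<dots> \<le> (l * N + sqrt m1) / 2 + ((1 - l) * N + sqrt m2) / 2 + W"
    using hT12 hT3 by linarith
  also have "\<dots> = (1/2) * (N + 2 * W + sqrt m1 + sqrt m2)" by (simp add: field_simps)
  finally show ?thesis
    unfolding N_def W_def m1_def m2_def M1_def M2_def Ps_def Qs_def Rs_def .
qed

end

theorem theorem2p4:
  fixes A P Q R S :: "'a::chilbert_space \<Rightarrow> 'a" and l :: real
  assumes "positive_op A" and "A \<noteq> (\<lambda>x. 0)"
    and "P \<in> BA A" and "Q \<in> BA A" and "R \<in> BA A" and "S \<in> BA A"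
    and "0 \<le> l" and "l \<le> 1"
  shows "omegaAA A (block P Q R S) \<le>
    (1/2) * (opnormA A P + 2 * omegaA A S
      + sqrt (opnormA A (\<lambda>x. scaleC (complex_of_real (l^2)) (P (sharpA A P x)) + Q (sharpA A Q x)))
      + sqrt (opnormA A (\<lambda>x. scaleC (complex_of_real ((1 - l)^2)) (P (sharpA A P x)) + sharpA A R (R x))))"
proof -
  have hne: "\<exists>u. normA A u = 1" by (rule unit_ex[OF assms(1) assms(2)])
  then obtain u0 where u0: "normA A u0 = 1" by blast
  show ?thesis
    unfolding omegaAA_def
  proof (rule cSup_least)
    show "{cmod (ipAA A (block P Q R S u) u) |u. normAA A u = 1} \<noteq> {}"
      using normAA_unit[OF assms(1) u0] by blast
  next
    fix t assume "t \<in> {cmod (ipAA A (block P Q R S u) u) |u. normAA A u = 1}"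
    then obtain u where t: "t = cmod (ipAA A (block P Q R S u) u)" and u: "normAA A u = 1" by blast
    show "t \<le> (1/2) * (opnormA A P + 2 * omegaA A S
      + sqrt (opnormA A (\<lambda>x. scaleC (complex_of_real (l^2)) (P (sharpA A P x)) + Q (sharpA A Q x)))
      + sqrt (opnormA A (\<lambda>x. scaleC (complex_of_real ((1 - l)^2)) (P (sharpA A P x)) + sharpA A R (R x))))"
      unfolding t by (rule main_pt[OF assms(1,3,4,5,6,7,8) hne u])
  qed
qed

end
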